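(* Let $f\in L^1_2(\mathbb{R}^3)$ be measurable with $0\le f\le1$ and $S(f)>0$. Then there exists $\epsilon_0\in(0,\tfrac14]$, depending only on $S(f)$ and $\|f\|_{1,2}$, such that the set $E_2:=\{v:\epsilon_0\le f(v)\le1-\epsilon_0\}$ satisfies $|E_2|\ge\frac{S(f)}{2\ln2}$. Furthermore there is $R>0$, depending only on $\epsilon_0$, $S(f)$ and $\|f\|_{1,2}$, such that $|E_2\cap\{|v|\le R\}|>\frac12|E_2|$.
   Context: $\|f\|_{1,s}=\int_{\mathbb{R}^3}|f(v)|(1+|v|^2)^{s/2}dv$, $L^1_2$ the corresponding space. Entropy: $S(f)=-\int_{\mathbb{R}^3}\big(f\ln f+(1-f)\ln(1-f)\big)dv$ with $0\ln0=0$. $|A|$ denotes Lebesgue measure. *)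

theory Defs
  imports "HOL-Analysis.Analysis"
begin

definition xlnx :: "real \<Rightarrow> real" where
  "xlnx x = (if x = 0 then 0 else x * ln x)"

definition weighted_L1_norm :: "real \<Rightarrow> (real^3 \<Rightarrow> real) \<Rightarrow> real" where
  "weighted_L1_norm s f = (\<integral>v. \<bar>f v\<bar> * (1 + (norm v)\<^sup>2) powr (s / 2) \<partial>lborel)"

definition in_L1_weighted :: "real \<Rightarrow> (real^3 \<Rightarrow> real) \<Rightarrow> bool" where
  "in_L1_weighted s f \<longleftrightarrow> f \<in> borel_measurable lborel \<and>
     integrable lborel (\<lambda>v. \<bar>f v\<bar> * (1 + (norm v)\<^sup>2) powr (s / 2))"

definition entropy :: "(real^3 \<Rightarrow> real) \<Rightarrow> real" where
  "entropy f = - (\<integral>v. xlnx (f v) + xlnx (1 - f v) \<partial>lborel)"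

end

theory Submission
  imports Defs "HOL-Probability.Distributions"
begin


lemma exp_abs_nn_finite:
  "(\<integral>\<^sup>+x. ennreal (exp (- \<bar>x\<bar> / 2)) \<partial>(lborel::real measure)) < \<infinity>"
proof -
  let ?g = "exponential_density (1/2)"
  have ps: "prob_space (density lborel ?g)" by (rule prob_space_exponential_density) simp
  have g1: "(\<integral>\<^sup>+x. ennreal (?g x) \<partial>lborel) = 1"
    using prob_space.emeasure_space_1[OF ps] by (simp add: emeasure_density)
  have g2: "(\<integral>\<^sup>+x. ennreal (?g (- x)) \<partial>lborel) = 1"
  proof -
    have "(\<integral>\<^sup>+x. ennreal (?g x) \<partial>lborel) = (\<integral>\<^sup>+x. ennreal (?g (- x)) \<partial>lborel)"
      using nn_integral_real_affine[of "\<lambda>x. ennreal (?g x)" "-1" 0] by simp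
    then show ?thesis using g1 by simp
  qed
  have "(\<integral>\<^sup>+x. ennreal (exp (- \<bar>x\<bar> / 2)) \<partial>lborel) \<le>
      (\<integral>\<^sup>+x. 2 * ennreal (?g x) + 2 * ennreal (?g (- x)) \<partial>lborel)"
  proof (rule nn_integral_mono)
    fix x :: real
    have "exp (- \<bar>x\<bar> / 2) \<le> 2 * ?g x + 2 * ?g (- x)"
    proof (cases "x < 0")
      case True
      then show ?thesis by (simp add: exponential_density_def)
    next
      case False
      then show ?thesis by (auto simp: exponential_density_def)
    qed
    then show "ennreal (exp (- \<bar>x\<bar> / 2)) \<le> 2 * ennreal (?g x) + 2 * ennreal (?g (- x))"
    proof -
      assume a: "exp (- \<bar>x\<bar> / 2) \<le> 2 * ?g x + 2 * ?g (- x)"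
      have "ennreal (exp (- \<bar>x\<bar> / 2)) \<le> ennreal (2 * ?g x + 2 * ?g (- x))"
        using a by (rule ennreal_leI)
      also have "\<dots> = 2 * ennreal (?g x) + 2 * ennreal (?g (- x))"
        by (simp add: ennreal_mult)
      finally show ?thesis .
    qed
  qed
  also have "\<dots> = 4"
    apply (subst nn_integral_add)
      apply simp apply simp
    apply (subst nn_integral_cmult, simp)+
    using g1 g2 by simp
  finally show ?thesis by (simp add: order_le_less_trans)
qed

lemma G_finite:
  "(\<integral>\<^sup>+v. ennreal (exp (- (\<Sum>b\<in>Basis. \<bar>v \<bullet> b\<bar>) / 2)) \<partial>(lborel::(real^3) measure)) < \<infinity>"
proof -
  have eq: "ennreal (exp (- (\<Sum>b\<in>Basis. \<bar>v \<bullet> b\<bar>) / 2)) = (\<Prod>b\<in>Basis. ennreal (exp (- \<bar>v \<bullet> b\<bar> / 2)))"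
    for v :: "real^3"
  proof -
    have "exp (- (\<Sum>b\<in>Basis. \<bar>v \<bullet> b\<bar>) / 2) = exp (\<Sum>b\<in>Basis. - \<bar>v \<bullet> b\<bar> / 2)"
      by (simp add: sum_negf sum_divide_distrib)
    also have "\<dots> = (\<Prod>b\<in>Basis. exp (- \<bar>v \<bullet> b\<bar> / 2))"
      by (simp add: exp_sum)
    finally show ?thesis by (simp add: prod_ennreal)
  qed
  have "(\<integral>\<^sup>+v. ennreal (exp (- (\<Sum>b\<in>Basis. \<bar>v \<bullet> b\<bar>) / 2)) \<partial>(lborel::(real^3) measure))
     = (\<Prod>b\<in>(Basis::(real^3) set). (\<integral>\<^sup>+x. ennreal (exp (- \<bar>x\<bar> / 2)) \<partial>lborel))"
    unfolding eq by (rule nn_integral_lborel_prod) auto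
  also have "\<dots> < \<infinity>"
    using exp_abs_nn_finite by (simp add: less_top[symmetric] ennreal_prod_eq_top power_eq_top_ennreal)
  finally show ?thesis .
qed



definition Hf :: "real \<Rightarrow> real" where "Hf x = - (xlnx x + xlnx (1 - x))"

lemma ln_ge_1_minus_inv: "(y::real) > 0 \<Longrightarrow> ln y \<ge> 1 - 1 / y"
proof -
  assume y: "y > 0"
  have "ln (1 / y) \<le> 1 / y - 1" using y ln_le_minus_one[of "1/y"] by simp
  then show ?thesis using y by (simp add: ln_div)
qed

lemma xlnx_alt: "xlnx x = x * ln x"
  by (simp add: xlnx_def)

lemma Hf_sym: "Hf (1 - x) = Hf x"
  by (simp add: Hf_def add.commute)

lemma neg_xlnx_le: "0 \<le> x \<Longrightarrow> - xlnx x \<le> x * w + exp (- w - 1)"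
proof (cases "x = 0")
  case True then show ?thesis by (simp add: xlnx_def)
next
  case False
  assume x0: "0 \<le> x"
  then have x: "x > 0" using False by simp
  define y where "y = x * exp (w + 1)"
  have y: "y > 0" using x by (simp add: y_def)
  have "ln y \<ge> 1 - 1 / y" using y by (rule ln_ge_1_minus_inv)
  moreover have "ln y = ln x + w + 1" using x by (simp add: y_def ln_mult)
  moreover have "1 / y = exp (- w - 1) / x" using x
    by (simp add: y_def exp_diff exp_minus exp_add field_simps)
  ultimately have "ln x + w \<ge> - exp (- w - 1) / x" by simp
  then have "x * (ln x + w) \<ge> x * (- exp (- w - 1) / x)"
    using x by (intro mult_left_mono) auto
  then show ?thesis using x by (simp add: xlnx_def algebra_simps)
qed

lemma neg_xlnx_1m_le: "0 \<le> x \<Longrightarrow> x \<le> 1 \<Longrightarrow> - xlnx (1 - x) \<le> x"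
proof (cases "x = 1")
  case True then show ?thesis by (simp add: xlnx_def)
next
  case False
  assume "0 \<le> x" "x \<le> 1"
  then have y: "1 - x > 0" using False by simp
  have "ln (1 - x) \<ge> 1 - 1 / (1 - x)" using y by (rule ln_ge_1_minus_inv)
  then have "(1 - x) * ln (1 - x) \<ge> (1 - x) * (1 - 1 / (1 - x))"
    using y by (intro mult_left_mono) auto
  moreover have "(1 - x) * (1 - 1 / (1 - x)) = - x" using y by (simp add: field_simps)
  ultimately show ?thesis using y by (simp add: xlnx_def)
qed

lemma Hf_young: "0 \<le> x \<Longrightarrow> x \<le> 1 \<Longrightarrow> Hf x \<le> x * w + exp (- w - 1) + x"
  using neg_xlnx_le[of x w] neg_xlnx_1m_le[of x] by (simp add: Hf_def)

lemma neg_xlnx_sqrt: "0 \<le> x \<Longrightarrow> - xlnx x \<le> 2 * sqrt x"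
proof (cases "x = 0")
  case True then show ?thesis by (simp add: xlnx_def)
next
  case False
  assume "0 \<le> x"
  then have x: "x > 0" using False by simp
  have s: "sqrt x > 0" using x by simp
  have "ln (sqrt x) \<ge> 1 - 1 / sqrt x" using s by (rule ln_ge_1_minus_inv)
  moreover have "ln x = 2 * ln (sqrt x)" using x by (simp add: ln_sqrt)
  ultimately have "- ln x \<le> 2 / sqrt x" by (simp add: field_simps)
  then have "x * (- ln x) \<le> x * (2 / sqrt x)" using x by (intro mult_left_mono) auto
  also have "x * (2 / sqrt x) = 2 * sqrt x" using x
    by (metis real_div_sqrt times_divide_eq_left times_divide_eq_right mult.commute less_imp_le)
  finally show ?thesis by (simp add: xlnx_def)
qed

lemma Hf_sqrt: "0 \<le> x \<Longrightarrow> x \<le> 1 \<Longrightarrow> Hf x \<le> 3 * sqrt x"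
proof -
  assume a: "0 \<le> x" "x \<le> 1"
  have s1: "sqrt x \<le> 1" using a by simp
  have "x = sqrt x * sqrt x" using a by simp
  also have "\<dots> \<le> 1 * sqrt x" using s1 a by (intro mult_right_mono) auto
  finally have "x \<le> sqrt x" by simp
  then show ?thesis using neg_xlnx_sqrt[of x] neg_xlnx_1m_le[of x] a by (simp add: Hf_def)
qed

lemma Hf_ln2: "0 \<le> x \<Longrightarrow> x \<le> 1 \<Longrightarrow> Hf x \<le> ln 2"
proof -
  assume a: "0 \<le> x" "x \<le> 1"
  have A: "xlnx x \<ge> x - 1/2 - x * ln 2"
  proof (cases "x = 0")
    case True then show ?thesis by (simp add: xlnx_def)
  next
    case False
    then have x: "x > 0" using a by simp
    have "ln (2 * x) \<ge> 1 - 1 / (2 * x)" using x by (intro ln_ge_1_minus_inv) simp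
    then have "x * ln (2 * x) \<ge> x * (1 - 1 / (2 * x))" using x by (intro mult_left_mono) auto
    moreover have "x * (1 - 1 / (2 * x)) = x - 1/2" using x by (simp add: field_simps)
    moreover have "x * ln (2 * x) = x * ln 2 + x * ln x" using x by (simp add: ln_mult distrib_left)
    ultimately show ?thesis using x by (simp add: xlnx_def)
  qed
  have B: "xlnx (1 - x) \<ge> (1 - x) - 1/2 - (1 - x) * ln 2"
  proof (cases "x = 1")
    case True then show ?thesis by (simp add: xlnx_def)
  next
    case False
    then have x: "1 - x > 0" using a by simp
    have "ln (2 * (1 - x)) \<ge> 1 - 1 / (2 * (1 - x))" using x by (intro ln_ge_1_minus_inv) simp
    then have m: "(1 - x) * ln (2 * (1 - x)) \<ge> (1 - x) * (1 - 1 / (2 * (1 - x)))"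
      using x by (intro mult_left_mono) auto
    have e1: "(1 - x) * (1 - 1 / (2 * (1 - x))) = (1 - x) - 1/2" using x by (simp add: field_simps)
    have e2: "(1 - x) * ln (2 * (1 - x)) = (1 - x) * ln 2 + (1 - x) * ln (1 - x)"
      using x ln_mult[of 2 "1 - x"] by (simp add: distrib_left del: left_diff_distrib right_diff_distrib left_diff_distrib' right_diff_distrib')
    have "xlnx (1 - x) = (1 - x) * ln (1 - x)" by (simp add: xlnx_def)
    then show ?thesis using m e1 e2 by linarith
  qed
  from A B show ?thesis by (simp add: Hf_def algebra_simps)
qed



lemma outside_box:
  fixes v :: "real^3"
  assumes "v \<notin> cbox (- (\<rho> *\<^sub>R One)) (\<rho> *\<^sub>R One)"
  shows "\<exists>b\<in>Basis. \<bar>v \<bullet> b\<bar> > \<rho>"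
proof -
  from assms obtain i where "i \<in> Basis" "\<not> (- \<rho> \<le> v \<bullet> i \<and> v \<bullet> i \<le> \<rho>)"
    by (auto simp: mem_box inner_minus_left)
  then show ?thesis by (intro bexI[of _ i]) auto
qed

lemma pointwise:
  fixes v :: "real^3"
  assumes x: "0 \<le> x" "x \<le> 1" and eps: "0 < \<epsilon>" "\<epsilon> \<le> 1/4" and rho: "\<rho> \<ge> 1"
  shows "Hf x \<le> ln 2 * (if \<epsilon> \<le> x \<and> x \<le> 1 - \<epsilon> then 1 else 0)
     + 3 * sqrt \<epsilon> * indicator (cbox (- (\<rho> *\<^sub>R One)) (\<rho> *\<^sub>R One)) v
     + (6 * sqrt \<epsilon> + (real DIM(real^3) + 1) / \<rho>) * (x * (1 + (norm v)\<^sup>2))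
     + exp (- \<rho> / 2) * exp (- (\<Sum>b\<in>Basis. \<bar>v \<bullet> b\<bar>) / 2)"
    (is "_ \<le> ?T1 + ?T2 + ?T3 + ?T4")
proof -
  define L where "L = (\<Sum>b\<in>(Basis::(real^3) set). \<bar>v \<bullet> b\<bar>)"
  define D where "D = real DIM(real^3)"
  have D0: "D \<ge> 0" by (simp add: D_def)
  have T1: "?T1 \<ge> 0" by simp
  have T2: "?T2 \<ge> 0" using eps by (simp add: indicator_def)
  have W0: "x * (1 + (norm v)\<^sup>2) \<ge> 0" using x by simp
  have c0: "0 \<le> 6 * sqrt \<epsilon> + (real DIM(real^3) + 1) / \<rho>" using rho eps
    by (intro add_nonneg_nonneg) auto
  have T3: "?T3 \<ge> 0" using mult_nonneg_nonneg[OF c0 W0] .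
  have T4: "?T4 \<ge> 0" by simp
  have W1: "x \<le> x * (1 + (norm v)\<^sup>2)" using x by (simp add: algebra_simps)
  consider (mid) "\<epsilon> \<le> x \<and> x \<le> 1 - \<epsilon>" | (low) "x < \<epsilon>" | (high) "x > 1 - \<epsilon>" by linarith
  then show ?thesis
  proof cases
    case mid
    then have "Hf x \<le> ?T1" using Hf_ln2[OF x] by simp
    then show ?thesis using T2 T3 T4 by linarith
  next
    case high
    have "Hf x = Hf (1 - x)" by (simp add: Hf_sym)
    also have "\<dots> \<le> 3 * sqrt (1 - x)" using x by (intro Hf_sqrt) auto
    also have "\<dots> \<le> 3 * sqrt \<epsilon>" using high by simp
    also have "\<dots> \<le> 6 * sqrt \<epsilon> * x" using high eps
      by (simp add: mult.assoc)
    also have "\<dots> \<le> 6 * sqrt \<epsilon> * (x * (1 + (norm v)\<^sup>2))" using W1 eps by (intro mult_left_mono) auto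
    also have "\<dots> \<le> ?T3" using rho W0 D0
      by (intro mult_right_mono) (auto simp: D_def)
    finally show ?thesis using T1 T2 T4 by linarith
  next
    case low
    show ?thesis
    proof (cases "v \<in> cbox (- (\<rho> *\<^sub>R One)) (\<rho> *\<^sub>R One)")
      case True
      have "Hf x \<le> 3 * sqrt x" using x by (intro Hf_sqrt)
      also have "\<dots> \<le> 3 * sqrt \<epsilon>" using low by simp
      also have "\<dots> = ?T2" using True by simp
      finally show ?thesis using T1 T3 T4 by linarith
    next
      case False
      then obtain b where b: "b \<in> Basis" "\<bar>v \<bullet> b\<bar> > \<rho>" using outside_box by blast
      have Lb: "\<bar>v \<bullet> b\<bar> \<le> L" unfolding L_def
        by (rule member_le_sum) (use b in auto)
      have nb: "\<bar>v \<bullet> b\<bar> \<le> norm v" using Basis_le_norm[OF b(1)] .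
      have nv: "norm v > \<rho>" using b nb by linarith
      have LD: "L \<le> D * norm v" unfolding L_def D_def
        using sum_bounded_above[of "Basis::(real^3) set" "\<lambda>b. \<bar>v \<bullet> b\<bar>" "norm v"] Basis_le_norm
        by auto
      have "Hf x \<le> x * L + exp (- L - 1) + x" using x by (rule Hf_young)
      also have "x * L + x \<le> (D + 1) / \<rho> * (x * (1 + (norm v)\<^sup>2))"
      proof -
        have r0: "\<rho> > 0" using rho by simp
        have n1: "norm v \<le> (norm v)\<^sup>2 / \<rho>" using nv r0
          by (simp add: field_simps power2_eq_square mult_right_mono)
        have n2: "1 \<le> (norm v)\<^sup>2 / \<rho>" using nv r0 rho n1 by linarith
        have "x * L \<le> x * (D * norm v)" using x LD by (intro mult_left_mono)
        also have "\<dots> \<le> x * (D * ((norm v)\<^sup>2 / \<rho>))" using x D0 n1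
          by (intro mult_left_mono) auto
        finally have a: "x * L \<le> x * D * ((norm v)\<^sup>2 / \<rho>)" by (simp add: mult.assoc)
        have b: "x \<le> x * ((norm v)\<^sup>2 / \<rho>)" using x n2 mult_left_mono[OF n2, of x] by simp
        have e: "(D + 1) * x * ((norm v)\<^sup>2 / \<rho>) = x * D * ((norm v)\<^sup>2 / \<rho>) + x * ((norm v)\<^sup>2 / \<rho>)"
          by (simp add: algebra_simps add_divide_distrib)
        have "x * L + x \<le> (D + 1) * x * ((norm v)\<^sup>2 / \<rho>)" using a b e by linarith
        also have "\<dots> \<le> (D + 1) * x * ((1 + (norm v)\<^sup>2) / \<rho>)" using x D0 r0
          by (intro mult_left_mono divide_right_mono) auto
        also have "\<dots> = (D + 1) / \<rho> * (x * (1 + (norm v)\<^sup>2))" by simp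
        finally show ?thesis .
      qed
      moreover have "exp (- L - 1) \<le> ?T4"
      proof -
        have "exp (- L - 1) \<le> exp (- \<rho> / 2 + - L / 2)" using b Lb by simp
        also have "\<dots> = ?T4" unfolding L_def by (subst exp_add) simp
        finally show ?thesis .
      qed
      ultimately have "Hf x \<le> (D + 1) / \<rho> * (x * (1 + (norm v)\<^sup>2)) + ?T4" by linarith
      moreover have "(D + 1) / \<rho> * (x * (1 + (norm v)\<^sup>2)) \<le> ?T3"
        using W0 eps by (intro mult_right_mono) (auto simp: D_def)
      ultimately show ?thesis using T1 T2 by linarith
    qed
  qed
qed



lemma meas_le:
  fixes g :: "real^3 \<Rightarrow> real"
  assumes A: "A \<in> sets lborel" and g: "integrable lborel g"
    and ge1: "\<And>v. v \<in> A \<Longrightarrow> 1 \<le> g v" and g0: "\<And>v. 0 \<le> g v"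
  shows "emeasure lborel A < \<infinity>" "measure lborel A \<le> (\<integral>v. g v \<partial>lborel)"
proof -
  have "emeasure lborel A = (\<integral>\<^sup>+v. indicator A v \<partial>lborel)" using A by simp
  also have "\<dots> \<le> (\<integral>\<^sup>+v. ennreal (g v) \<partial>lborel)"
    by (intro nn_integral_mono) (auto simp: indicator_def ge1 g0)
  also have "\<dots> = ennreal (\<integral>v. g v \<partial>lborel)"
    using g g0 by (intro nn_integral_eq_integral) auto
  finally have le: "emeasure lborel A \<le> ennreal (\<integral>v. g v \<partial>lborel)" .
  then show "emeasure lborel A < \<infinity>" using le_less_trans by fastforce
  then have "emeasure lborel A = ennreal (measure lborel A)"
    by (intro emeasure_eq_ennreal_measure) auto
  with le have "ennreal (measure lborel A) \<le> ennreal (\<integral>v. g v \<partial>lborel)" by simp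
  moreover have "0 \<le> (\<integral>v. g v \<partial>lborel)" using g0 by simp
  ultimately show "measure lborel A \<le> (\<integral>v. g v \<partial>lborel)"
    by (simp add: ennreal_le_iff)
qed

lemma G_integrable:
  "integrable lborel (\<lambda>v::real^3. exp (- (\<Sum>b\<in>Basis. \<bar>v \<bullet> b\<bar>) / 2))"
proof (subst integrable_iff_bounded, intro conjI)
  show "(\<lambda>v::real^3. exp (- (\<Sum>b\<in>Basis. \<bar>v \<bullet> b\<bar>) / 2)) \<in> borel_measurable lborel"
    by measurable
  show "(\<integral>\<^sup>+v. ennreal (norm (exp (- (\<Sum>b\<in>Basis. \<bar>v \<bullet> b\<bar>) / 2))) \<partial>(lborel::(real^3) measure)) < \<infinity>"
    using G_finite by simp
qed



theorem lemma4p10: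
  fixes S0 M :: real
  assumes "S0 > 0"
  shows "\<exists>\<epsilon>0::real. 0 < \<epsilon>0 \<and> \<epsilon>0 \<le> 1/4 \<and> (\<exists>R::real. R > 0 \<and>
    (\<forall>f :: real^3 \<Rightarrow> real.
       in_L1_weighted 2 f \<and> (\<forall>v. 0 \<le> f v \<and> f v \<le> 1) \<and>
       entropy f = S0 \<and> weighted_L1_norm 2 f = M \<longrightarrow>
       (let E2 = {v. \<epsilon>0 \<le> f v \<and> f v \<le> 1 - \<epsilon>0} in
          emeasure lborel E2 \<ge> ennreal (S0 / (2 * ln 2)) \<and>
          emeasure lborel (E2 \<inter> {v. norm v \<le> R}) > emeasure lborel E2 / 2)))"
proof -
  have S0: "S0 > 0" by fact
  define G where "G = (\<lambda>v::real^3. exp (- (\<Sum>b\<in>Basis. \<bar>v \<bullet> b\<bar>) / 2))"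
  define D where "D = real DIM(real^3)"
  define M' where "M' = \<bar>M\<bar> + 1"
  define CG where "CG = (\<integral>v. G v \<partial>lborel)"
  have Gint: "integrable lborel G" unfolding G_def by (rule G_integrable)
  have CG0: "CG \<ge> 0" unfolding CG_def G_def by simp
  have D0: "D \<ge> 0" by (simp add: D_def)
  have M'1: "M' \<ge> 1" by (simp add: M'_def)
  define \<rho> where "\<rho> = max 1 (4 * ((D + 1) * M' + 2 * CG) / S0)"
  have rho1: "\<rho> \<ge> 1" by (simp add: \<rho>_def)
  have rho0: "\<rho> > 0" using rho1 by simp
  define Box where "Box = cbox (- (\<rho> *\<^sub>R (One::real^3))) (\<rho> *\<^sub>R One)"
  define VB where "VB = measure lborel Box"
  have Boxfin: "emeasure lborel Box < \<infinity>" unfolding Box_def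
    by (rule emeasure_bounded_finite) (rule bounded_cbox)
  have VB0: "VB \<ge> 0" by (simp add: VB_def)
  define s where "s = S0 / (4 * (3 * VB + 6 * M'))"
  have s0: "s > 0" using S0 VB0 M'1 by (simp add: s_def)
  define \<epsilon> where "\<epsilon> = min (1/4) (s\<^sup>2)"
  have eps0: "\<epsilon> > 0" using s0 by (simp add: \<epsilon>_def)
  have eps4: "\<epsilon> \<le> 1/4" by (simp add: \<epsilon>_def)
  have sqeps: "sqrt \<epsilon> \<le> s"
  proof -
    have "\<epsilon> \<le> s\<^sup>2" by (simp add: \<epsilon>_def)
    then have "sqrt \<epsilon> \<le> sqrt (s\<^sup>2)" by (rule real_sqrt_le_mono)
    then show ?thesis using s0 by simp
  qed
  define R where "R = 4 * M' / (\<epsilon> * S0) + 1"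
  have R1: "R \<ge> 1" using M'1 eps0 S0 by (simp add: R_def)
  have R0: "R > 0" using R1 by simp
  have const1: "3 * sqrt \<epsilon> * VB + 6 * sqrt \<epsilon> * M' \<le> S0 / 4"
  proof -
    have "3 * sqrt \<epsilon> * VB + 6 * sqrt \<epsilon> * M' = sqrt \<epsilon> * (3 * VB + 6 * M')" by (simp add: algebra_simps)
    also have "\<dots> \<le> s * (3 * VB + 6 * M')" using sqeps VB0 M'1 by (intro mult_right_mono) auto
    also have "\<dots> = S0 / 4"
    proof -
      have "3 * VB + 6 * M' > 0" using VB0 M'1 by simp
      then show ?thesis unfolding s_def by (simp add: field_simps)
    qed
    finally show ?thesis .
  qed
  have const2: "(D + 1) * M' / \<rho> + exp (- \<rho> / 2) * CG \<le> S0 / 4"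
  proof -
    have e: "exp (\<rho> / 2) \<ge> \<rho> / 2" using exp_ge_add_one_self[of "\<rho>/2"] by linarith
    have "exp (- \<rho> / 2) = 1 / exp (\<rho> / 2)" by (simp add: exp_minus field_simps)
    also have "\<dots> \<le> 1 / (\<rho> / 2)" using e rho0 by (intro divide_left_mono) auto
    also have "\<dots> = 2 / \<rho>" by simp
    finally have e2: "exp (- \<rho> / 2) \<le> 2 / \<rho>" .
    have "exp (- \<rho> / 2) * CG \<le> 2 / \<rho> * CG" using e2 CG0 by (intro mult_right_mono)
    then have "(D + 1) * M' / \<rho> + exp (- \<rho> / 2) * CG \<le> ((D + 1) * M' + 2 * CG) / \<rho>"
      by (simp add: add_divide_distrib)
    also have "\<dots> \<le> S0 / 4"
    proof -
      have "\<rho> \<ge> 4 * ((D + 1) * M' + 2 * CG) / S0" by (simp add: \<rho>_def)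
      then have "\<rho> * S0 \<ge> 4 * ((D + 1) * M' + 2 * CG)" using S0 by (simp add: field_simps)
      then show ?thesis using rho0 S0 by (simp add: field_simps)
    qed
    finally show ?thesis .
  qed
  have main: "in_L1_weighted 2 f \<and> (\<forall>v. 0 \<le> f v \<and> f v \<le> 1) \<and>
       entropy f = S0 \<and> weighted_L1_norm 2 f = M \<longrightarrow>
       (let E2 = {v. \<epsilon> \<le> f v \<and> f v \<le> 1 - \<epsilon>} in
          emeasure lborel E2 \<ge> ennreal (S0 / (2 * ln 2)) \<and>
          emeasure lborel (E2 \<inter> {v. norm v \<le> R}) > emeasure lborel E2 / 2)" for f :: "real^3 \<Rightarrow> real"
  proof (intro impI, elim conjE)
    assume L1: "in_L1_weighted 2 f" and f01: "\<forall>v. 0 \<le> f v \<and> f v \<le> 1"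
      and ent: "entropy f = S0" and wn: "weighted_L1_norm 2 f = M"
    have fm[measurable]: "f \<in> borel_measurable lborel" using L1 by (simp add: in_L1_weighted_def)
    have f0: "0 \<le> f v" and f1: "f v \<le> 1" for v using f01 by auto
    define W where "W = (\<lambda>v. f v * (1 + (norm v)\<^sup>2))"
    have Weq: "(\<lambda>v. \<bar>f v\<bar> * (1 + (norm v)\<^sup>2) powr (2 / 2)) = W"
    proof
      fix v :: "real^3"
      have "(1 + (norm v)\<^sup>2) powr (2 / 2) = 1 + (norm v)\<^sup>2" by simp
      then show "\<bar>f v\<bar> * (1 + (norm v)\<^sup>2) powr (2 / 2) = W v"
        using f0[of v] by (simp add: W_def)
    qed
    have Wint: "integrable lborel W" using L1 Weq unfolding in_L1_weighted_def by simp
    have WM: "(\<integral>v. W v \<partial>lborel) = M" using wn Weq unfolding weighted_L1_norm_def by simp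
    have W0: "0 \<le> W v" for v using f0[of v] by (simp add: W_def)
    have fW: "f v \<le> W v" for v using f0[of v] by (simp add: W_def algebra_simps)
    have M0: "0 \<le> M" using WM W0 by (metis integral_nonneg_AE AE_I2)
    have MM': "M \<le> M'" using M0 by (simp add: M'_def)
    have hint0: "integrable lborel (\<lambda>v. xlnx (f v) + xlnx (1 - f v))"
    proof (rule ccontr)
      assume "\<not> ?thesis"
      then have "entropy f = 0" unfolding entropy_def by (simp add: not_integrable_integral_eq)
      then show False using ent S0 by simp
    qed
    have Hint: "integrable lborel (\<lambda>v. Hf (f v))"
      unfolding Hf_def using integrable_minus[OF hint0] by simp
    have HS: "(\<integral>v. Hf (f v) \<partial>lborel) = S0"
      using ent unfolding entropy_def Hf_def by (simp only: integral_minus)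
    define E2 where "E2 = {v. \<epsilon> \<le> f v \<and> f v \<le> 1 - \<epsilon>}"
    have E2m[measurable]: "E2 \<in> sets lborel" unfolding E2_def by measurable
    have E2fin: "emeasure lborel E2 < \<infinity>"
    proof (rule meas_le(1)[OF E2m, of "\<lambda>v. (1 / \<epsilon>) * W v"])
      show "integrable lborel (\<lambda>v. 1 / \<epsilon> * W v)" using Wint by simp
      show "1 \<le> 1 / \<epsilon> * W v" if "v \<in> E2" for v
      proof -
        have "\<epsilon> \<le> W v" using that fW[of v] by (simp add: E2_def)
        then show ?thesis using eps0 by (simp add: field_simps)
      qed
      show "0 \<le> 1 / \<epsilon> * W v" for v using eps0 W0[of v] by simp
    qed
    define mE where "mE = measure lborel E2"
    define c3 where "c3 = 6 * sqrt \<epsilon> + (D + 1) / \<rho>"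
    have c30: "c3 \<ge> 0" using D0 rho0 eps0 unfolding c3_def by (intro add_nonneg_nonneg) auto
    define RHS where "RHS = (\<lambda>v. ln 2 * indicator E2 v + 3 * sqrt \<epsilon> * indicator Box v
        + c3 * W v + exp (- \<rho> / 2) * G v)"
    have pw: "Hf (f v) \<le> RHS v" for v
    proof -
      have "indicator E2 v = (if \<epsilon> \<le> f v \<and> f v \<le> 1 - \<epsilon> then 1 else (0::real))"
        by (simp add: E2_def indicator_def)
      then show ?thesis
        using pointwise[OF f0[of v] f1[of v] eps0 eps4 rho1, of v]
        unfolding RHS_def c3_def W_def G_def Box_def D_def by simp
    qed
    have hb: "has_bochner_integral lborel RHS
        (ln 2 * mE + 3 * sqrt \<epsilon> * VB + c3 * M + exp (- \<rho> / 2) * CG)"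
      unfolding RHS_def mE_def VB_def
      apply (intro has_bochner_integral_add has_bochner_integral_mult_right
          has_bochner_integral_real_indicator E2m E2fin Boxfin)
        apply (simp add: Box_def)
      using has_bochner_integral_integrable[OF Wint] WM apply simp
      using has_bochner_integral_integrable[OF Gint] CG_def apply simp
      done
    have "S0 \<le> (\<integral>v. RHS v \<partial>lborel)"
      unfolding HS[symmetric]
      by (rule integral_mono[OF Hint integrable.intros[OF hb] pw])
    also have "\<dots> = ln 2 * mE + 3 * sqrt \<epsilon> * VB + c3 * M + exp (- \<rho> / 2) * CG"
      using hb by (rule has_bochner_integral_integral_eq)
    finally have S0le: "S0 \<le> ln 2 * mE + 3 * sqrt \<epsilon> * VB + c3 * M + exp (- \<rho> / 2) * CG" .
    have "c3 * M \<le> c3 * M'" using MM' c30 by (intro mult_left_mono)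
    also have "c3 * M' = 6 * sqrt \<epsilon> * M' + (D + 1) * M' / \<rho>" by (simp add: c3_def algebra_simps)
    finally have "S0 \<le> ln 2 * mE + S0 / 2" using S0le const1 const2 by linarith
    then have lnmE: "S0 / 2 \<le> ln 2 * mE" by linarith
    have ln2: "ln (2::real) > 0" by simp
    have mEge: "S0 / (2 * ln 2) \<le> mE"
      using lnmE ln2 by (simp add: field_simps)
    have emE: "emeasure lborel E2 = ennreal mE"
      unfolding mE_def using E2fin by (intro emeasure_eq_ennreal_measure) auto
    have part1: "emeasure lborel E2 \<ge> ennreal (S0 / (2 * ln 2))"
      unfolding emE using mEge by (rule ennreal_leI)
    define Bn where "Bn = {v::real^3. norm v \<le> R}"
    have Bnm[measurable]: "Bn \<in> sets lborel" unfolding Bn_def by measurable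
    have diffle: "measure lborel (E2 - Bn) \<le> (\<integral>v. (1 / (\<epsilon> * (1 + R\<^sup>2))) * W v \<partial>lborel)"
    proof (rule meas_le(2))
      show "E2 - Bn \<in> sets lborel" by measurable
      show "integrable lborel (\<lambda>v. 1 / (\<epsilon> * (1 + R\<^sup>2)) * W v)" using Wint by simp
      show "0 \<le> 1 / (\<epsilon> * (1 + R\<^sup>2)) * W v" for v using eps0 W0[of v] by simp
      show "1 \<le> 1 / (\<epsilon> * (1 + R\<^sup>2)) * W v" if "v \<in> E2 - Bn" for v
      proof -
        have a: "\<epsilon> \<le> f v" using that by (simp add: E2_def)
        have "R < norm v" using that by (simp add: Bn_def)
        then have "R\<^sup>2 \<le> (norm v)\<^sup>2" using R0 by (intro power_mono) auto
        then have b: "1 + R\<^sup>2 \<le> 1 + (norm v)\<^sup>2" by simp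
        have "\<epsilon> * (1 + R\<^sup>2) \<le> f v * (1 + (norm v)\<^sup>2)" using a b eps0
          by (intro mult_mono) auto
        moreover have "\<epsilon> * (1 + R\<^sup>2) > 0" using eps0 by (simp add: add_pos_nonneg)
        ultimately have "1 \<le> W v / (\<epsilon> * (1 + R\<^sup>2))" by (simp add: W_def)
        then show ?thesis by simp
      qed
    qed
    also have "\<dots> = M / (\<epsilon> * (1 + R\<^sup>2))" using WM by simp
    also have "\<dots> \<le> M' / (\<epsilon> * (1 + R\<^sup>2))" using MM' eps0 by (intro divide_right_mono) auto
    also have "\<dots> < S0 / 4"
    proof -
      have "R > 4 * M' / (\<epsilon> * S0)" by (simp add: R_def)
      then have "R * (\<epsilon> * S0) > 4 * M'" using eps0 S0 by (simp add: field_simps)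
      moreover have "R \<le> 1 + R\<^sup>2"
      proof -
        have "R * 1 \<le> R * R" using R1 by (intro mult_left_mono) auto
        then show ?thesis by (simp add: power2_eq_square)
      qed
      ultimately have "(1 + R\<^sup>2) * (\<epsilon> * S0) > 4 * M'" using eps0 S0
        by (smt (verit) mult_right_mono mult_pos_pos)
      moreover have p: "\<epsilon> * (1 + R\<^sup>2) > 0" using eps0 by (simp add: add_pos_nonneg)
      ultimately have "M' < S0 / 4 * (\<epsilon> * (1 + R\<^sup>2))" by (simp add: algebra_simps)
      then show ?thesis using p by (simp add: divide_less_eq)
    qed
    also have "\<dots> \<le> mE / 2"
    proof -
      have "ln (2::real) \<le> 1" using ln_2_less_1 by simp
      then have "S0 / 2 \<le> S0 / (2 * ln 2)" using S0 ln2 by (intro frac_le) auto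
      then show ?thesis using mEge by linarith
    qed
    finally have dlt: "measure lborel (E2 - Bn) < mE / 2" .
    have "measure lborel (E2 - (E2 \<inter> Bn)) = mE - measure lborel (E2 \<inter> Bn)"
      unfolding mE_def using E2fin E2m Bnm by (intro measure_Diff) auto
    moreover have "E2 - (E2 \<inter> Bn) = E2 - Bn" by auto
    ultimately have mI: "measure lborel (E2 \<inter> Bn) > mE / 2" using dlt by simp
    have "emeasure lborel (E2 \<inter> Bn) \<le> emeasure lborel E2" by (rule emeasure_mono[OF _ E2m]) auto
    then have Ifin: "emeasure lborel (E2 \<inter> Bn) < \<infinity>" using E2fin by simp
    have eI: "emeasure lborel (E2 \<inter> Bn) = ennreal (measure lborel (E2 \<inter> Bn))"
      using Ifin by (intro emeasure_eq_ennreal_measure) auto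
    have mE0: "0 \<le> mE" by (simp add: mE_def)
    have half: "emeasure lborel E2 / 2 = ennreal (mE / 2)"
      unfolding emE using mE0 divide_ennreal[of mE 2] by simp
    have part2: "emeasure lborel (E2 \<inter> Bn) > emeasure lborel E2 / 2"
      unfolding eI half using mI mE0 by (subst ennreal_less_iff) auto
    show "let E2 = {v. \<epsilon> \<le> f v \<and> f v \<le> 1 - \<epsilon>} in
          emeasure lborel E2 \<ge> ennreal (S0 / (2 * ln 2)) \<and>
          emeasure lborel (E2 \<inter> {v. norm v \<le> R}) > emeasure lborel E2 / 2"
      using part1 part2 unfolding E2_def Bn_def Let_def by simp
  qed
  show ?thesis
    apply (rule exI[of _ \<epsilon>])
    apply (intro conjI eps0 eps4)
    apply (rule exI[of _ R])
    using R0 main by blast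
qed


end
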